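(* Let $\varepsilon>0$ and let $\lambda:[0,\infty)\to[0,\infty)$ be a BS density function. For a 1-D SCS with BS density function $\nu$, denote by $\left.\frac{C}{I}\right|_{\nu(r)}$ the random variable $\frac{R_1^{-\varepsilon}}{\sum_{i=2}^\infty R_i^{-\varepsilon}}$, where $R_1\le R_2\le\cdots$ are the ordered points of a Poisson point process on $[0,\infty)$ with intensity $\nu$. Then for every $a>0$, $$\left.\frac{C}{I}\right|_{\lambda(r)}=_{\mathrm{st}}\left.\frac{C}{I}\right|_{\frac1a\lambda(\frac ra)},$$ i.e. the two random variables have the same distribution.
   Context: A 1-D shotgun cellular system (SCS) with BS density function $\lambda(r)$ is a Poisson point process on $[0,\infty)$ with intensity $\lambda$, whose points are distances of base stations from a mobile station at the origin; all BSs have unit transmission power and unit shadow fading, path loss is $R^{-\varepsilon}$, and the mobile is served by the nearest BS, so the carrier-to-interference ratio is $\frac{C}{I}=\frac{R_1^{-\varepsilon}}{\sum_{i\ge2}R_i^{-\varepsilon}}$. For random variables $X,Y$, $X=_{\mathrm{st}}Y$ means $\mathbb P(X>x)=\mathbb P(Y>x)$ for all real $x$. *)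

theory Defs
  imports "HOL-Probability.Probability"
begin

definition bs_density :: "(real \<Rightarrow> real) \<Rightarrow> bool" where
  "bs_density lam \<longleftrightarrow> lam \<in> borel_measurable borel \<and> (\<forall>r\<ge>0. lam r \<ge> 0)"

definition intensity_measure :: "(real \<Rightarrow> real) \<Rightarrow> real set \<Rightarrow> ennreal" where
  "intensity_measure lam A =
     (\<integral>\<^sup>+ x. indicator (A \<inter> {0..}) x * ennreal (lam x) \<partial>lborel)"

definition num_points :: "(nat \<Rightarrow> 'a \<Rightarrow> real) \<Rightarrow> 'a \<Rightarrow> real set \<Rightarrow> ennreal" where
  "num_points R \<omega> A = emeasure (count_space UNIV) {i. R i \<omega> \<in> A}"

definition is_PPP :: "'a measure \<Rightarrow> (real \<Rightarrow> real) \<Rightarrow> (nat \<Rightarrow> 'a \<Rightarrow> real) \<Rightarrow> bool" where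
  "is_PPP M lam R \<longleftrightarrow>
     (\<forall>\<omega>\<in>space M. (\<forall>i. 0 \<le> R i \<omega>) \<and> incseq (\<lambda>i. R i \<omega>)) \<and>
     (\<forall>i. R i \<in> borel_measurable M) \<and>
     (\<forall>A. A \<in> sets borel \<and> A \<subseteq> {0..} \<longrightarrow>
        (\<lambda>\<omega>. num_points R \<omega> A) \<in> borel_measurable M \<and>
        (intensity_measure lam A < \<infinity> \<longrightarrow>
           (\<forall>k::nat. measure M {\<omega>\<in>space M. num_points R \<omega> A = of_nat k}
              = exp (- enn2real (intensity_measure lam A))
                * enn2real (intensity_measure lam A) ^ k / fact k)) \<and>
        (intensity_measure lam A = \<infinity> \<longrightarrow>
           (AE \<omega> in M. num_points R \<omega> A = \<infinity>))) \<and>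
     (\<forall>(I::nat set) A. finite I \<and> disjoint_family_on A I \<and>
        (\<forall>i\<in>I. A i \<in> sets borel \<and> A i \<subseteq> {0..}) \<longrightarrow>
        prob_space.indep_vars M (\<lambda>_. borel) (\<lambda>i \<omega>. num_points R \<omega> (A i)) I)"

definition CI_ratio :: "real \<Rightarrow> (nat \<Rightarrow> 'a \<Rightarrow> real) \<Rightarrow> 'a \<Rightarrow> ereal" where
  "CI_ratio eps R \<omega> =
     enn2ereal (ennreal (R 0 \<omega> powr (- eps)) / (\<Sum>i. ennreal (R (Suc i) \<omega> powr (- eps))))"

end

theory Submission
  imports Defs "HOL-Library.Nat_Bijection"
begin

lemma distr_eq_countable_support:
  fixes X :: "'a \<Rightarrow> ennreal" and Y :: "'b \<Rightarrow> ennreal"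
  assumes X: "X \<in> borel_measurable M" and Y: "Y \<in> borel_measurable M'"
    and S: "countable S"
    and AX: "AE \<omega> in M. X \<omega> \<in> S" and AY: "AE \<omega> in M'. Y \<omega> \<in> S"
    and eq: "\<And>s. s \<in> S \<Longrightarrow> emeasure M {\<omega>\<in>space M. X \<omega> = s} = emeasure M' {\<omega>\<in>space M'. Y \<omega> = s}"
  shows "distr M borel X = distr M' borel Y"
proof (rule measure_eqI)
  fix B :: "ennreal set" assume B: "B \<in> sets (distr M borel X)"
  then have Bb: "B \<in> sets borel" by simp
  have Sb: "S \<in> sets borel" by (rule sets.countable[OF _ S]) (simp add: borel_closed)
  have key: "emeasure (distr N borel Z) B = (\<integral>\<^sup>+s. emeasure N {\<omega>\<in>space N. Z \<omega> = s} \<partial>count_space (B \<inter> S))"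
    if Z: "Z \<in> borel_measurable N" and AZ: "AE \<omega> in N. Z \<omega> \<in> S" for N :: "'c measure" and Z
  proof -
    let ?D = "distr N borel Z"
    have "emeasure ?D (- S) = emeasure N (Z -` (- S) \<inter> space N)"
      using Sb Z by (intro emeasure_distr) auto
    also have "\<dots> = 0"
    proof -
      have e: "{x \<in> space N. \<not> Z x \<in> S} = Z -` (- S) \<inter> space N" by auto
      have m: "Z -` (- S) \<inter> space N \<in> sets N" using Sb Z by (intro measurable_sets) auto
      show ?thesis using AE_iff_measurable[OF m e] AZ by simp
    qed
    finally have n: "emeasure ?D (-S) = 0" .
    have "emeasure ?D B = emeasure ?D (B \<inter> S)"
    proof (rule emeasure_Diff_null_set[symmetric, THEN trans])
      show "B - (B \<inter> S) \<in> null_sets ?D" 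
      proof (rule null_sets_subset)
        show "- S \<in> null_sets ?D" using n Sb by (intro null_setsI) (simp_all add: borel_comp)
        show "B - (B \<inter> S) \<in> sets ?D" using Bb Sb by simp
      qed blast
    qed (use Bb in \<open>simp_all add: Diff_Diff_Int\<close>)
    also have "\<dots> = (\<integral>\<^sup>+s. emeasure ?D {s} \<partial>count_space (B \<inter> S))"
      using S by (intro emeasure_countable_singleton) auto
    also have "\<dots> = (\<integral>\<^sup>+s. emeasure N {\<omega>\<in>space N. Z \<omega> = s} \<partial>count_space (B \<inter> S))"
    proof (intro nn_integral_cong)
      fix s
      have "emeasure ?D {s} = emeasure N (Z -` {s} \<inter> space N)" using Z by (intro emeasure_distr) auto
      also have "Z -` {s} \<inter> space N = {\<omega>\<in>space N. Z \<omega> = s}" by auto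
      finally show "emeasure ?D {s} = emeasure N {\<omega>\<in>space N. Z \<omega> = s}" .
    qed
    finally show ?thesis .
  qed
  show "emeasure (distr M borel X) B = emeasure (distr M' borel Y) B"
    unfolding key[OF X AX] key[OF Y AY]
    by (intro nn_integral_cong) (auto simp: eq)
qed simp

lemma PPP_c1: "is_PPP M lam R \<Longrightarrow> \<forall>\<omega>\<in>space M. (\<forall>i. 0 \<le> R i \<omega>) \<and> incseq (\<lambda>i. R i \<omega>)"
  unfolding is_PPP_def by (rule conjunct1)
lemma PPP_c2: "is_PPP M lam R \<Longrightarrow> \<forall>i. R i \<in> borel_measurable M"
  unfolding is_PPP_def by (drule conjunct2, rule conjunct1)
lemma PPP_c3: "is_PPP M lam R \<Longrightarrow> \<forall>A. A \<in> sets borel \<and> A \<subseteq> {0..} \<longrightarrow>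
        (\<lambda>\<omega>. num_points R \<omega> A) \<in> borel_measurable M \<and>
        (intensity_measure lam A < \<infinity> \<longrightarrow>
           (\<forall>k::nat. measure M {\<omega>\<in>space M. num_points R \<omega> A = of_nat k}
              = exp (- enn2real (intensity_measure lam A))
                * enn2real (intensity_measure lam A) ^ k / fact k)) \<and>
        (intensity_measure lam A = \<infinity> \<longrightarrow>
           (AE \<omega> in M. num_points R \<omega> A = \<infinity>))"
  unfolding is_PPP_def by (drule conjunct2, drule conjunct2, rule conjunct1)
lemma PPP_c4: "is_PPP M lam R \<Longrightarrow> \<forall>(I::nat set) A. finite I \<and> disjoint_family_on A I \<and>
        (\<forall>i\<in>I. A i \<in> sets borel \<and> A i \<subseteq> {0..}) \<longrightarrow>
        prob_space.indep_vars M (\<lambda>_. borel) (\<lambda>i \<omega>. num_points R \<omega> (A i)) I"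
  unfolding is_PPP_def by (drule conjunct2, drule conjunct2, rule conjunct2)

lemma PPP_nonneg: "is_PPP M lam R \<Longrightarrow> \<omega> \<in> space M \<Longrightarrow> 0 \<le> R i \<omega>"
  using PPP_c1 by metis
lemma PPP_inc: "is_PPP M lam R \<Longrightarrow> \<omega> \<in> space M \<Longrightarrow> incseq (\<lambda>i. R i \<omega>)"
  using PPP_c1 by metis
lemma PPP_meas: "is_PPP M lam R \<Longrightarrow> R i \<in> borel_measurable M"
  using PPP_c2 by metis
lemma PPP_count_meas: "is_PPP M lam R \<Longrightarrow> A \<in> sets borel \<Longrightarrow> A \<subseteq> {0..} \<Longrightarrow>
   (\<lambda>\<omega>. num_points R \<omega> A) \<in> borel_measurable M"
  by (drule PPP_c3, erule allE[of _ A]) simp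
lemma PPP_poisson: "is_PPP M lam R \<Longrightarrow> A \<in> sets borel \<Longrightarrow> A \<subseteq> {0..} \<Longrightarrow>
   intensity_measure lam A < \<infinity> \<Longrightarrow>
   measure M {\<omega>\<in>space M. num_points R \<omega> A = of_nat k}
     = exp (- enn2real (intensity_measure lam A)) * enn2real (intensity_measure lam A) ^ k / fact k"
  by (drule PPP_c3, erule allE[of _ A]) simp
lemma PPP_inf: "is_PPP M lam R \<Longrightarrow> A \<in> sets borel \<Longrightarrow> A \<subseteq> {0..} \<Longrightarrow>
   intensity_measure lam A = \<infinity> \<Longrightarrow> AE \<omega> in M. num_points R \<omega> A = \<infinity>"
  by (drule PPP_c3, erule allE[of _ A]) simp
lemma PPP_indep: "is_PPP M lam R \<Longrightarrow> finite (I::nat set) \<Longrightarrow> disjoint_family_on A I \<Longrightarrow>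
   (\<And>i. i\<in>I \<Longrightarrow> A i \<in> sets borel \<and> A i \<subseteq> {0..}) \<Longrightarrow>
   prob_space.indep_vars M (\<lambda>_. borel) (\<lambda>i \<omega>. num_points R \<omega> (A i)) I"
  using PPP_c4[of M lam R, rule_format, of I A] by blast

lemma PPP_AE_nat:
  assumes P: "prob_space M" and R: "is_PPP M lam R" and A: "A \<in> sets borel" "A \<subseteq> {0..}"
    and fin: "intensity_measure lam A < \<infinity>"
  shows "AE \<omega> in M. num_points R \<omega> A \<in> range of_nat"
proof -
  interpret prob_space M by fact
  let ?m = "enn2real (intensity_measure lam A)"
  let ?E = "\<lambda>k::nat. {\<omega>\<in>space M. num_points R \<omega> A = of_nat k}"
  have meas: "(\<lambda>\<omega>. num_points R \<omega> A) \<in> borel_measurable M" using PPP_count_meas[OF R A] .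
  have Ek: "?E k \<in> sets M" for k using meas by measurable
  have s1: "(\<lambda>k. prob (?E k)) sums prob (\<Union>k. ?E k)"
    by (intro finite_measure_UNION) (auto simp: Ek disjoint_family_on_def)
  have e: "(\<lambda>k. prob (?E k)) = (\<lambda>k. exp (- ?m) * (?m ^ k /\<^sub>R fact k))"
  proof
    fix k
    show "prob (?E k) = exp (- ?m) * (?m ^ k /\<^sub>R fact k)"
      unfolding PPP_poisson[OF R A fin] by (simp add: divide_inverse)
  qed
  have s2: "(\<lambda>k. exp (- ?m) * (?m ^ k /\<^sub>R fact k)) sums (exp (- ?m) * exp ?m)"
    by (intro sums_mult exp_converges)
  have "prob (\<Union>k. ?E k) = exp (- ?m) * exp ?m"
    using sums_unique2[OF s1 s2[folded e]] .
  then have "prob (\<Union>k. ?E k) = 1" by (simp add: mult_exp_exp)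
  then have "AE \<omega> in M. \<omega> \<in> (\<Union>k. ?E k)" by (rule AE_prob_1)
  then show ?thesis by eventually_elim auto
qed

lemma PPP_marginal:
  assumes P: "prob_space M" and R: "is_PPP M lam R"
    and P': "prob_space M'" and Q: "is_PPP M' lam Q"
    and A: "A \<in> sets borel" "A \<subseteq> {0..}"
  shows "distr M borel (\<lambda>\<omega>. num_points R \<omega> A) = distr M' borel (\<lambda>\<omega>. num_points Q \<omega> A)"
proof (cases "intensity_measure lam A < \<infinity>")
  case True
  have mR: "(\<lambda>\<omega>. num_points R \<omega> A) \<in> borel_measurable M" using PPP_count_meas[OF R A] .
  have mQ: "(\<lambda>\<omega>. num_points Q \<omega> A) \<in> borel_measurable M'" using PPP_count_meas[OF Q A] .
  have cS: "countable (range (of_nat :: nat \<Rightarrow> ennreal))" by (rule countable_image) simp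
  show ?thesis
  proof (rule distr_eq_countable_support[where S="range of_nat", OF mR mQ cS PPP_AE_nat[OF P R A True] PPP_AE_nat[OF P' Q A True]])
    fix s assume "s \<in> (range of_nat :: ennreal set)"
    then obtain k where s: "s = of_nat k" by auto
    have "measure M {\<omega>\<in>space M. num_points R \<omega> A = s} = measure M' {\<omega>\<in>space M'. num_points Q \<omega> A = s}"
      unfolding s PPP_poisson[OF R A True] PPP_poisson[OF Q A True] ..
    then show "emeasure M {\<omega>\<in>space M. num_points R \<omega> A = s} = emeasure M' {\<omega>\<in>space M'. num_points Q \<omega> A = s}"
      using finite_measure.emeasure_eq_measure[OF prob_space.finite_measure[OF P]] finite_measure.emeasure_eq_measure[OF prob_space.finite_measure[OF P']] by simp
  qed
next
  case False
  then have inf: "intensity_measure lam A = \<infinity>" by (simp add: less_top[symmetric])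
  have mR: "(\<lambda>\<omega>. num_points R \<omega> A) \<in> borel_measurable M" using PPP_count_meas[OF R A] .
  have mQ: "(\<lambda>\<omega>. num_points Q \<omega> A) \<in> borel_measurable M'" using PPP_count_meas[OF Q A] .
  have aR: "AE \<omega> in M. num_points R \<omega> A \<in> {\<infinity>}"
    using PPP_inf[OF R A inf] by eventually_elim simp
  have aQ: "AE \<omega> in M'. num_points Q \<omega> A \<in> {\<infinity>}"
    using PPP_inf[OF Q A inf] by eventually_elim simp
  show ?thesis
  proof (rule distr_eq_countable_support[where S="{\<infinity>}", OF mR mQ _ aR aQ])
    fix s assume "s \<in> {\<infinity>::ennreal}"
    then have s: "s = \<infinity>" by simp
    have sR: "{\<omega>\<in>space M. num_points R \<omega> A = s} \<in> sets M" using mR by measurable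
    have sQ: "{\<omega>\<in>space M'. num_points Q \<omega> A = s} \<in> sets M'" using mQ by measurable
    have "AE \<omega> in M. \<omega> \<in> {\<omega>\<in>space M. num_points R \<omega> A = s}"
      using PPP_inf[OF R A inf] AE_space by eventually_elim (simp add: s)
    then have 1: "emeasure M {\<omega>\<in>space M. num_points R \<omega> A = s} = 1"
      by (rule prob_space.emeasure_eq_1_AE[OF P sR])
    have "AE \<omega> in M'. \<omega> \<in> {\<omega>\<in>space M'. num_points Q \<omega> A = s}"
      using PPP_inf[OF Q A inf] AE_space by eventually_elim (simp add: s)
    then have 2: "emeasure M' {\<omega>\<in>space M'. num_points Q \<omega> A = s} = 1"
      by (rule prob_space.emeasure_eq_1_AE[OF P' sQ])
    show "emeasure M {\<omega>\<in>space M. num_points R \<omega> A = s} = emeasure M' {\<omega>\<in>space M'. num_points Q \<omega> A = s}"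
      using 1 2 by simp
  qed simp
qed

lemma intensity_scale:
  assumes a: "a > 0" and lam: "lam \<in> borel_measurable borel" and A: "A \<in> sets borel"
  shows "intensity_measure (\<lambda>r. (1 / a) * lam (r / a)) ((\<lambda>x. x / a) -` A) = intensity_measure lam A"
proof -
  let ?f = "\<lambda>x. indicator ((\<lambda>x. x / a) -` A \<inter> {0..}) x * ennreal ((1 / a) * lam (x / a))"
  have dm: "(\<lambda>x::real. x / a) \<in> borel_measurable borel" by measurable
  have sA: "(\<lambda>x. x / a) -` A \<in> sets borel"
    using measurable_sets[OF dm A] by simp
  note A[measurable] lam[measurable]
  have gm: "(\<lambda>x. indicator (A \<inter> {0..}) x * ennreal (lam x)) \<in> borel_measurable borel" by measurable
  have fm: "?f \<in> borel_measurable borel" using sA lam by measurable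
  have "intensity_measure (\<lambda>r. (1 / a) * lam (r / a)) ((\<lambda>x. x / a) -` A) = (\<integral>\<^sup>+x. ?f x \<partial>lborel)"
    unfolding intensity_measure_def ..
  also have "\<dots> = \<bar>a\<bar> * (\<integral>\<^sup>+x. ?f (0 + a * x) \<partial>lborel)"
    using a by (intro nn_integral_real_affine fm) auto
  also have "(\<lambda>x. ?f (0 + a * x)) = (\<lambda>x. ennreal (1/a) * (indicator (A \<inter> {0..}) x * ennreal (lam x)))"
  proof
    fix x
    have i: "indicator ((\<lambda>x. x / a) -` A \<inter> {0..}) (a * x) = (indicator (A \<inter> {0..}) x :: ennreal)"
      using a by (auto simp: indicator_def zero_le_mult_iff)
    have ax: "a * x / a = x" using a by simp
    have m: "ennreal (1 / a * lam x) = ennreal (1/a) * ennreal (lam x)" using a by (intro ennreal_mult') simp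
    show "?f (0 + a * x) = ennreal (1/a) * (indicator (A \<inter> {0..}) x * ennreal (lam x))"
      by (simp only: i ax m add_0_left mult.left_commute)
  qed
  also have "\<bar>a\<bar> * (\<integral>\<^sup>+x. ennreal (1/a) * (indicator (A \<inter> {0..}) x * ennreal (lam x)) \<partial>lborel)
      = ennreal a * ennreal (1/a) * (\<integral>\<^sup>+x. indicator (A \<inter> {0..}) x * ennreal (lam x) \<partial>lborel)"
    using a gm by (subst nn_integral_cmult) (simp_all add: mult.assoc)
  also have "ennreal a * ennreal (1/a) = 1"
    using a by (simp add: ennreal_mult'[symmetric])
  finally show ?thesis by (simp add: intensity_measure_def)
qed

lemma PPP_scale:
  assumes a: "a > 0" and lam: "lam \<in> borel_measurable borel"
    and R: "is_PPP M (\<lambda>r. (1 / a) * lam (r / a)) R"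
  shows "is_PPP M lam (\<lambda>i \<omega>. R i \<omega> / a)"
proof -
  let ?lam' = "\<lambda>r. (1 / a) * lam (r / a)"
  let ?s = "\<lambda>A. (\<lambda>x. x / a) -` A"
  have np: "num_points (\<lambda>i \<omega>. R i \<omega> / a) \<omega> A = num_points R \<omega> (?s A)" for \<omega> A
    by (simp add: num_points_def)
  have dm: "(\<lambda>x::real. x / a) \<in> borel_measurable borel" by measurable
  have sb: "?s A \<in> sets borel" if "A \<in> sets borel" for A
    using measurable_sets[OF dm that] by simp
  have s0: "?s A \<subseteq> {0..}" if "A \<subseteq> {0..}" for A
    using that a by (auto simp: subset_eq zero_le_divide_iff)
  have i1: "\<forall>\<omega>\<in>space M. (\<forall>i. 0 \<le> R i \<omega> / a) \<and> incseq (\<lambda>i. R i \<omega> / a)"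
  proof (intro ballI conjI allI)
    fix \<omega> i assume "\<omega> \<in> space M"
    then show "0 \<le> R i \<omega> / a" using PPP_nonneg[OF R] a by simp
  next
    fix \<omega> assume w: "\<omega> \<in> space M"
    show "incseq (\<lambda>i. R i \<omega> / a)"
      using PPP_inc[OF R w] a by (auto simp: incseq_def intro: divide_right_mono)
  qed
  have i2: "\<forall>i. (\<lambda>\<omega>. R i \<omega> / a) \<in> borel_measurable M"
    using PPP_meas[OF R] by auto
  have i3: "\<forall>A. A \<in> sets borel \<and> A \<subseteq> {0..} \<longrightarrow>
        (\<lambda>\<omega>. num_points (\<lambda>i \<omega>. R i \<omega> / a) \<omega> A) \<in> borel_measurable M \<and>
        (intensity_measure lam A < \<infinity> \<longrightarrow>
           (\<forall>k::nat. measure M {\<omega>\<in>space M. num_points (\<lambda>i \<omega>. R i \<omega> / a) \<omega> A = of_nat k}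
              = exp (- enn2real (intensity_measure lam A))
                * enn2real (intensity_measure lam A) ^ k / fact k)) \<and>
        (intensity_measure lam A = \<infinity> \<longrightarrow>
           (AE \<omega> in M. num_points (\<lambda>i \<omega>. R i \<omega> / a) \<omega> A = \<infinity>))"
  proof (intro allI impI conjI)
    fix A :: "real set" assume A: "A \<in> sets borel \<and> A \<subseteq> {0..}"
    have eq: "intensity_measure ?lam' (?s A) = intensity_measure lam A"
      using A a lam by (intro intensity_scale) auto
    show "(\<lambda>\<omega>. num_points (\<lambda>i \<omega>. R i \<omega> / a) \<omega> A) \<in> borel_measurable M"
      unfolding np using A by (intro PPP_count_meas[OF R] sb s0) auto
    fix k :: nat assume "intensity_measure lam A < \<infinity>"
    then show "measure M {\<omega>\<in>space M. num_points (\<lambda>i \<omega>. R i \<omega> / a) \<omega> A = of_nat k}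
              = exp (- enn2real (intensity_measure lam A))
                * enn2real (intensity_measure lam A) ^ k / fact k"
      unfolding np eq[symmetric] using A by (intro PPP_poisson[OF R] sb s0) (auto simp: eq)
  next
    fix A :: "real set" assume A: "A \<in> sets borel \<and> A \<subseteq> {0..}"
    have eq: "intensity_measure ?lam' (?s A) = intensity_measure lam A"
      using A a lam by (intro intensity_scale) auto
    assume inf: "intensity_measure lam A = \<infinity>"
    have inf': "intensity_measure ?lam' (?s A) = \<infinity>" unfolding eq by (rule inf)
    show "AE \<omega> in M. num_points (\<lambda>i \<omega>. R i \<omega> / a) \<omega> A = \<infinity>"
      unfolding np by (rule PPP_inf[OF R sb[OF conjunct1[OF A]] s0[OF conjunct2[OF A]] inf'])
  qed
  have i4: "\<forall>(I::nat set) A. finite I \<and> disjoint_family_on A I \<and>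
        (\<forall>i\<in>I. A i \<in> sets borel \<and> A i \<subseteq> {0..}) \<longrightarrow>
        prob_space.indep_vars M (\<lambda>_. borel) (\<lambda>i \<omega>. num_points (\<lambda>i \<omega>. R i \<omega> / a) \<omega> (A i)) I"
  proof (intro allI impI)
    fix I :: "nat set" and A :: "nat \<Rightarrow> real set" assume H: "finite I \<and> disjoint_family_on A I \<and> (\<forall>i\<in>I. A i \<in> sets borel \<and> A i \<subseteq> {0..})"
    have "prob_space.indep_vars M (\<lambda>_. borel) (\<lambda>i \<omega>. num_points R \<omega> (?s (A i))) I"
    proof (rule PPP_indep[OF R])
      show "finite I" using H by simp
      show "disjoint_family_on (\<lambda>i. ?s (A i)) I" using H by (auto simp: disjoint_family_on_def)
      fix i assume "i \<in> I"
      then have "A i \<in> sets borel" "A i \<subseteq> {0..}" using H by auto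
      then show "?s (A i) \<in> sets borel \<and> ?s (A i) \<subseteq> {0..}" by (intro conjI sb s0)
    qed
    then show "prob_space.indep_vars M (\<lambda>_. borel) (\<lambda>i \<omega>. num_points (\<lambda>i \<omega>. R i \<omega> / a) \<omega> (A i)) I"
      unfolding np .
  qed
  show ?thesis unfolding is_PPP_def by (intro conjI i1 i2 i3 i4)
qed

definition atom :: "(nat \<Rightarrow> real set) \<Rightarrow> nat set \<Rightarrow> nat set \<Rightarrow> real set" where
  "atom A J T = {x. 0 \<le> x \<and> (\<forall>j\<in>J\<inter>T. x \<in> A j) \<and> (\<forall>j\<in>J-T. x \<notin> A j)}"

lemma atom_sets:
  assumes J: "finite J" and A: "\<And>j. A j \<in> sets borel"
  shows "atom A J T \<in> sets borel"
proof -
  note A[measurable]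
  have fin1: "finite (J \<inter> T)" "finite (J - T)" using J by auto
  have "{x \<in> space borel. 0 \<le> (x::real) \<and> (\<forall>j\<in>J\<inter>T. x \<in> A j) \<and> (\<forall>j\<in>J-T. x \<notin> A j)} \<in> sets borel"
    using fin1 by measurable
  then show ?thesis unfolding atom_def by simp
qed

lemma atom_nonneg: "atom A J T \<subseteq> {0..}"
  unfolding atom_def by auto

lemma atom_disj:
  assumes "T1 \<subseteq> J" "T2 \<subseteq> J" "T1 \<noteq> T2"
  shows "atom A J T1 \<inter> atom A J T2 = {}"
proof -
  obtain j where j: "j \<in> J" "(j \<in> T1) \<noteq> (j \<in> T2)" using assms by blast
  show ?thesis
  proof (rule equals0I)
    fix x assume x: "x \<in> atom A J T1 \<inter> atom A J T2"
    show False
    proof (cases "j \<in> T1")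
      case True
      then have "j \<notin> T2" using j by simp
      then show False using x j True unfolding atom_def by auto
    next
      case False
      then have "j \<in> T2" using j by simp
      then show False using x j False unfolding atom_def by auto
    qed
  qed
qed

lemma atom_cover:
  assumes "j \<in> J" "A j \<subseteq> {0..}"
  shows "{i. R i \<in> A j} = (\<Union>T\<in>{T\<in>Pow J. j \<in> T}. {i. R i \<in> atom A J T})"
proof (intro set_eqI iffI)
  fix i assume i: "i \<in> {i. R i \<in> A j}"
  let ?T = "{j'\<in>J. R i \<in> A j'}"
  have "R i \<in> atom A J ?T" using i assms unfolding atom_def by auto
  moreover have "?T \<in> {T\<in>Pow J. j \<in> T}" using i assms by auto
  ultimately show "i \<in> (\<Union>T\<in>{T\<in>Pow J. j \<in> T}. {i. R i \<in> atom A J T})" by blast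
next
  fix i assume "i \<in> (\<Union>T\<in>{T\<in>Pow J. j \<in> T}. {i. R i \<in> atom A J T})"
  then obtain T where "T \<subseteq> J" "j \<in> T" "R i \<in> atom A J T" by auto
  then show "i \<in> {i. R i \<in> A j}" using assms unfolding atom_def by auto
qed

lemma num_points_atoms:
  assumes J: "finite J" "j \<in> J" and A0: "A j \<subseteq> {0..}"
  shows "num_points R \<omega> (A j) = (\<Sum>T\<in>{T\<in>Pow J. j \<in> T}. num_points R \<omega> (atom A J T))"
proof -
  have fin: "finite {T\<in>Pow J. j \<in> T}" using J by auto
  have disj: "disjoint_family_on (\<lambda>T. {i. R i \<omega> \<in> atom A J T}) {T\<in>Pow J. j \<in> T}"
    unfolding disjoint_family_on_def
  proof (intro ballI impI)
    fix T1 T2 assume "T1 \<in> {T\<in>Pow J. j \<in> T}" "T2 \<in> {T\<in>Pow J. j \<in> T}" "T1 \<noteq> T2"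
    then have "atom A J T1 \<inter> atom A J T2 = {}" by (intro atom_disj) auto
    then show "{i. R i \<omega> \<in> atom A J T1} \<inter> {i. R i \<omega> \<in> atom A J T2} = {}" by blast
  qed
  have "num_points R \<omega> (A j) = emeasure (count_space UNIV) (\<Union>T\<in>{T\<in>Pow J. j \<in> T}. {i. R i \<omega> \<in> atom A J T})"
    unfolding num_points_def using atom_cover[of j J A "\<lambda>i. R i \<omega>", OF J(2) A0] by simp
  also have "\<dots> = (\<Sum>T\<in>{T\<in>Pow J. j \<in> T}. emeasure (count_space UNIV) {i. R i \<omega> \<in> atom A J T})"
    by (rule sum_emeasure[symmetric]) (use disj fin in auto)
  finally show ?thesis unfolding num_points_def .
qed

lemma count_law_rep:
  assumes P: "prob_space M" and R: "is_PPP M lam R" and J: "finite J"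
    and A: "\<And>j. A j \<in> sets borel" and A0: "\<And>j. A j \<subseteq> {0..}"
  shows "distr M (PiM J (\<lambda>_. borel)) (\<lambda>\<omega>. \<lambda>j\<in>J. num_points R \<omega> (A j)) =
    distr (PiM (set_encode ` Pow J) (\<lambda>k. distr M borel (\<lambda>\<omega>. num_points R \<omega> (atom A J (set_decode k)))))
      (PiM J (\<lambda>_. borel))
      (\<lambda>g. \<lambda>j\<in>J. \<Sum>T\<in>{T\<in>Pow J. j \<in> T}. g (set_encode T))"
proof -
  define K where "K = set_encode ` Pow J"
  define B where "B k = atom A J (set_decode k)" for k
  define X where "X k \<omega> = num_points R \<omega> (B k)" for k \<omega>
  define V where "V \<omega> = (\<lambda>k\<in>K. X k \<omega>)" for \<omega>
  define G where "G g = (\<lambda>j\<in>J. \<Sum>T\<in>{T\<in>Pow J. j \<in> T}. g (set_encode T))" for g :: "nat \<Rightarrow> ennreal"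
  have finK: "finite K" unfolding K_def using J by simp
  have KnE: "K \<noteq> {}" unfolding K_def by blast
  have Bs: "B k \<in> sets borel" for k unfolding B_def by (rule atom_sets[OF J A])
  have B0: "B k \<subseteq> {0..}" for k unfolding B_def by (rule atom_nonneg)
  have Xm: "X k \<in> borel_measurable M" for k unfolding X_def by (rule PPP_count_meas[OF R Bs B0])
  have Vm: "V \<in> measurable M (PiM K (\<lambda>_. borel))"
    unfolding V_def by (rule measurable_restrict) (rule Xm)
  have encK: "set_encode T \<in> K" if "T \<in> Pow J" for T unfolding K_def using that by blast
  have Gm: "G \<in> measurable (PiM K (\<lambda>_. borel)) (PiM J (\<lambda>_. borel))"
    unfolding G_def
  proof (rule measurable_restrict)
    fix j assume "j \<in> J"
    show "(\<lambda>g::nat\<Rightarrow>ennreal. \<Sum>T\<in>{T\<in>Pow J. j \<in> T}. g (set_encode T)) \<in> borel_measurable (PiM K (\<lambda>_. borel))"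
    proof (rule borel_measurable_sum)
      fix T assume "T \<in> {T\<in>Pow J. j \<in> T}"
      then have "set_encode T \<in> K" using encK by blast
      then show "(\<lambda>g::nat\<Rightarrow>ennreal. g (set_encode T)) \<in> borel_measurable (PiM K (\<lambda>_. borel))"
        by (rule measurable_component_singleton)
    qed
  qed
  have disj: "disjoint_family_on B K"
    unfolding disjoint_family_on_def
  proof (intro ballI impI)
    fix k1 k2 assume k: "k1 \<in> K" "k2 \<in> K" "k1 \<noteq> k2"
    then obtain T1 T2 where T: "T1 \<subseteq> J" "T2 \<subseteq> J" "k1 = set_encode T1" "k2 = set_encode T2"
      unfolding K_def by blast
    have f: "finite T1" "finite T2" using T J finite_subset by auto
    have d: "set_decode k1 = T1" "set_decode k2 = T2" using T f by (simp_all add: set_encode_inverse)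
    have "T1 \<noteq> T2" using k T by auto
    then show "B k1 \<inter> B k2 = {}" unfolding B_def d by (rule atom_disj[OF T(1,2)])
  qed
  have indep: "prob_space.indep_vars M (\<lambda>_. borel) X K"
    unfolding X_def by (rule PPP_indep[OF R finK disj]) (simp add: Bs B0)
  have dV: "distr M (PiM K (\<lambda>_. borel)) V = PiM K (\<lambda>k. distr M borel (X k))"
    using prob_space.indep_vars_iff_distr_eq_PiM[OF P KnE, where M'="\<lambda>_. borel" and X=X] indep Xm
    unfolding V_def by simp
  have eqf: "(\<lambda>\<omega>. \<lambda>j\<in>J. num_points R \<omega> (A j)) = G \<circ> V"
  proof (rule ext)
    fix \<omega>
    show "(\<lambda>j\<in>J. num_points R \<omega> (A j)) = (G \<circ> V) \<omega>"
      unfolding o_def G_def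
    proof (rule restrict_ext)
      fix j assume j: "j \<in> J"
      have "(\<Sum>T\<in>{T\<in>Pow J. j \<in> T}. V \<omega> (set_encode T)) = (\<Sum>T\<in>{T\<in>Pow J. j \<in> T}. num_points R \<omega> (atom A J T))"
      proof (rule sum.cong[OF refl])
        fix T assume T: "T \<in> {T\<in>Pow J. j \<in> T}"
        then have "finite T" using J finite_subset by auto
        then show "V \<omega> (set_encode T) = num_points R \<omega> (atom A J T)"
          using encK[of T] T unfolding V_def X_def B_def by (simp add: set_encode_inverse)
      qed
      also have "\<dots> = num_points R \<omega> (A j)" by (rule num_points_atoms[OF J j A0, symmetric])
      finally show "num_points R \<omega> (A j) = (\<Sum>T\<in>{T\<in>Pow J. j \<in> T}. V \<omega> (set_encode T))" by simp
    qed
  qed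
  have "distr M (PiM J (\<lambda>_. borel)) (\<lambda>\<omega>. \<lambda>j\<in>J. num_points R \<omega> (A j)) = distr M (PiM J (\<lambda>_. borel)) (G \<circ> V)"
    unfolding eqf ..
  also have "\<dots> = distr (distr M (PiM K (\<lambda>_. borel)) V) (PiM J (\<lambda>_. borel)) G"
    by (rule distr_distr[OF Gm Vm, symmetric])
  also have "\<dots> = distr (PiM K (\<lambda>k. distr M borel (X k))) (PiM J (\<lambda>_. borel)) G"
    unfolding dV ..
  finally show ?thesis unfolding K_def X_def B_def G_def .
qed

lemma count_law:
  fixes J :: "nat set"
  assumes P: "prob_space M" and R: "is_PPP M lam R"
    and P': "prob_space M'" and Q: "is_PPP M' lam Q" and J: "finite J"
    and A: "\<And>j. A j \<in> sets borel" and A0: "\<And>j. A j \<subseteq> {0..}"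
  shows "distr M (PiM J (\<lambda>_. borel)) (\<lambda>\<omega>. \<lambda>j\<in>J. num_points R \<omega> (A j)) =
         distr M' (PiM J (\<lambda>_. borel)) (\<lambda>\<omega>. \<lambda>j\<in>J. num_points Q \<omega> (A j))"
proof -
  have "PiM (set_encode ` Pow J) (\<lambda>k. distr M borel (\<lambda>\<omega>. num_points R \<omega> (atom A J (set_decode k))))
      = PiM (set_encode ` Pow J) (\<lambda>k. distr M' borel (\<lambda>\<omega>. num_points Q \<omega> (atom A J (set_decode k))))"
    by (rule PiM_cong[OF refl]) (rule PPP_marginal[OF P R P' Q atom_sets[OF J A] atom_nonneg])
  then show ?thesis
    unfolding count_law_rep[OF P R J A A0] count_law_rep[OF P' Q J A A0] by simp
qed

lemma count_le_iff:
  assumes R: "is_PPP M lam R" and w: "\<omega> \<in> space M"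
  shows "R j \<omega> \<le> t \<longleftrightarrow> of_nat (Suc j) \<le> num_points R \<omega> {0..t}"
proof -
  have nn: "\<And>i. 0 \<le> R i \<omega>" using PPP_nonneg[OF R w] .
  have inc: "\<And>i k. i \<le> k \<Longrightarrow> R i \<omega> \<le> R k \<omega>" using PPP_inc[OF R w] by (simp add: incseq_def)
  let ?S = "{i. R i \<omega> \<in> {0..t}}"
  show ?thesis
  proof
    assume le: "R j \<omega> \<le> t"
    have sub: "{..j} \<subseteq> ?S"
    proof
      fix i assume "i \<in> {..j}"
      then have "R i \<omega> \<le> R j \<omega>" using inc by simp
      then show "i \<in> ?S" using le nn[of i] by simp
    qed
    have "of_nat (Suc j) = emeasure (count_space UNIV) {..j}"
      by (simp add: emeasure_count_space_finite)
    also have "\<dots> \<le> emeasure (count_space UNIV) ?S"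
      using sub by (intro emeasure_mono) simp_all
    finally show "of_nat (Suc j) \<le> num_points R \<omega> {0..t}" unfolding num_points_def .
  next
    assume ge: "of_nat (Suc j) \<le> num_points R \<omega> {0..t}"
    show "R j \<omega> \<le> t"
    proof (rule ccontr)
      assume "\<not> R j \<omega> \<le> t"
      then have gt: "t < R j \<omega>" by simp
      have sub: "?S \<subseteq> {..<j}"
      proof
        fix i assume i: "i \<in> ?S"
        show "i \<in> {..<j}"
        proof (rule ccontr)
          assume "i \<notin> {..<j}"
          then have "j \<le> i" by simp
          then have "R j \<omega> \<le> R i \<omega>" using inc by simp
          then show False using i gt by simp
        qed
      qed
      have "num_points R \<omega> {0..t} \<le> emeasure (count_space UNIV) {..<j}"
        unfolding num_points_def using sub by (intro emeasure_mono) simp_all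
      also have "\<dots> = of_nat j" by (simp add: emeasure_count_space_finite)
      finally have "of_nat (Suc j) \<le> (of_nat j :: ennreal)" using ge by (rule order_trans[rotated])
      then show False by simp
    qed
  qed
qed

definition gens :: "(nat \<Rightarrow> real) set set" where
  "gens = {{f. \<forall>j\<in>J. f j \<le> t j} | J t. finite J}"

lemma space_PiM_UNIV: "space (PiM (UNIV::nat set) (\<lambda>_. borel :: real measure)) = UNIV"
  by (simp add: space_PiM)

lemma gens_sets: "gens \<subseteq> sets (PiM UNIV (\<lambda>_. borel :: real measure))"
proof
  fix e assume "e \<in> gens"
  then obtain J t where e: "e = {f. \<forall>j\<in>J. f j \<le> t j}" and J: "finite J" unfolding gens_def by blast
  have "{f \<in> space (PiM UNIV (\<lambda>_. borel :: real measure)). \<forall>j\<in>J. f j \<le> t j} \<in> sets (PiM UNIV (\<lambda>_. borel :: real measure))"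
    using J by measurable
  then show "e \<in> sets (PiM UNIV (\<lambda>_. borel :: real measure))" unfolding e space_PiM_UNIV by simp
qed

lemma sets_PiM_gens: "sets (PiM UNIV (\<lambda>_. borel :: real measure)) = sigma_sets UNIV gens"
proof (rule antisym)
  show "sigma_sets UNIV gens \<subseteq> sets (PiM UNIV (\<lambda>_. borel :: real measure))"
    using sets.sigma_sets_subset[OF gens_sets] unfolding space_PiM_UNIV .
  have coord: "{f. f i \<in> X} \<in> sigma_sets UNIV gens" if X: "X \<in> sets (borel :: real measure)" for i X
  proof -
    have b: "sets (borel::real measure) = sigma_sets UNIV (range atMost)"
      unfolding borel_eq_atMost by (rule sets_measure_of) simp
    have "X \<in> sigma_sets UNIV (range atMost)"
      using X unfolding b .
    then show ?thesis
    proof (induction rule: sigma_sets.induct)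
      case (Basic a)
      then obtain t where a: "a = {..t}" by auto
      have "{f. f i \<in> a} = {f. \<forall>j\<in>{i}. f j \<le> (\<lambda>_. t) j}" unfolding a by auto
      moreover have "{f. \<forall>j\<in>{i}. f j \<le> (\<lambda>_. t) j} \<in> gens" unfolding gens_def by (intro CollectI exI[of _ "{i}"] exI[of _ "\<lambda>_. t"] conjI refl) simp
      ultimately show ?case by (simp add: sigma_sets.Basic)
    next
      case Empty
      show ?case by (simp add: sigma_sets.Empty)
    next
      case (Compl a)
      have "{f. f i \<in> UNIV - a} = UNIV - {f. f i \<in> a}" by auto
      then show ?case using sigma_sets.Compl[OF Compl.IH] by simp
    next
      case (Union a)
      have "{f. f i \<in> \<Union> (range a)} = (\<Union>n. {f. f i \<in> a n})" by auto
      then show ?case using sigma_sets.Union[of "\<lambda>n. {f. f i \<in> a n}", OF Union.IH] by simp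
    qed
  qed
  have PE: "(\<Pi>\<^sub>E i\<in>(UNIV::nat set). space (borel::real measure)) = UNIV"
    using space_PiM_UNIV by (simp add: space_PiM)
  have top: "(\<Pi>\<^sub>E i\<in>(UNIV::nat set). space (borel::real measure)) \<in> sigma_sets UNIV gens"
    unfolding PE by (rule sigma_sets_top)
  have sub: "{{f \<in> \<Pi>\<^sub>E i\<in>(UNIV::nat set). space (borel::real measure). f i \<in> A} |i A. i \<in> UNIV \<and> A \<in> sets borel} \<subseteq> sigma_sets UNIV gens"
  proof
    fix e :: "(nat \<Rightarrow> real) set" assume "e \<in> {{f \<in> \<Pi>\<^sub>E i\<in>(UNIV::nat set). space (borel :: real measure). f i \<in> A} |i A. i \<in> UNIV \<and> A \<in> sets borel}"
    then obtain i A where e: "e = {f \<in> \<Pi>\<^sub>E i\<in>(UNIV::nat set). space (borel :: real measure). f i \<in> A}" and A: "A \<in> sets borel" by blast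
    have "e = {f. f i \<in> A}" unfolding e PE by simp
    then show "e \<in> sigma_sets UNIV gens" using coord[OF A] by simp
  qed
  have "sigma_sets (\<Pi>\<^sub>E i\<in>(UNIV::nat set). space (borel::real measure)) {{f \<in> \<Pi>\<^sub>E i\<in>(UNIV::nat set). space (borel::real measure). f i \<in> A} |i A. i \<in> UNIV \<and> A \<in> sets borel} \<subseteq> sigma_sets UNIV gens"
    unfolding PE by (rule sigma_sets_mono[OF sub[unfolded PE]])
  then show "sets (PiM UNIV (\<lambda>_. borel :: real measure)) \<subseteq> sigma_sets UNIV gens"
    unfolding sets_PiM_single .
qed

lemma cdiv:
  fixes u v :: ennreal and c :: real
  assumes c: "0 < c"
  shows "(ennreal c * u) / (ennreal c * v) = u / v"
proof -
  have i: "inverse (ennreal c * v) = inverse (ennreal c) * inverse v"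
    using c by (intro ennreal_inverse_mult') simp
  have ci: "ennreal c * inverse (ennreal c) = 1"
  proof -
    have "ennreal c * inverse (ennreal c) = ennreal c * ennreal (inverse c)" using c by (simp add: inverse_ennreal)
    also have "\<dots> = ennreal (c * inverse c)" using c by (simp add: ennreal_mult'[symmetric])
    also have "\<dots> = 1" using c by simp
    finally show ?thesis .
  qed
  have "(ennreal c * u) / (ennreal c * v) = (ennreal c * inverse (ennreal c)) * (u * inverse v)"
    unfolding divide_ennreal_def i by (simp add: ac_simps)
  also have "\<dots> = u / v" unfolding ci divide_ennreal_def by simp
  finally show ?thesis .
qed

lemma powr_scale:
  fixes u a e :: real
  assumes "0 \<le> u" "0 < a"
  shows "(u / a) powr (- e) = a powr e * u powr (- e)"
proof -
  have "(u / a) powr (- e) = u powr (- e) / a powr (- e)" by (rule powr_divide)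
  also have "a powr (- e) = inverse (a powr e)" by (rule powr_minus)
  finally show ?thesis by (simp add: divide_inverse mult.commute)
qed

definition Ffun :: "real \<Rightarrow> (nat \<Rightarrow> real) \<Rightarrow> ereal" where
  "Ffun eps f = enn2ereal (ennreal (f 0 powr (- eps)) / (\<Sum>i. ennreal (f (Suc i) powr (- eps))))"

lemma Ffun_scale:
  assumes a: "0 < a" and r: "\<And>i. 0 \<le> r i"
  shows "Ffun eps (\<lambda>i. r i / a) = Ffun eps r"
proof -
  have c: "0 < a powr eps" using a by simp
  have e: "ennreal ((r i / a) powr (- eps)) = ennreal (a powr eps) * ennreal (r i powr (- eps))" for i
    unfolding powr_scale[OF r a] using c by (intro ennreal_mult') simp
  show ?thesis unfolding Ffun_def e ennreal_suminf_cmult cdiv[OF c] ..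
qed

lemma Ffun_meas: "Ffun eps \<in> borel_measurable (PiM UNIV (\<lambda>_. borel :: real measure))"
  unfolding Ffun_def by measurable

lemma event_eq:
  fixes J :: "nat set" and t :: "nat \<Rightarrow> real"
  assumes R: "is_PPP M lam R" and J: "finite J"
  shows "emeasure M {\<omega>\<in>space M. \<forall>j\<in>J. R j \<omega> \<le> t j} =
    emeasure (distr M (PiM J (\<lambda>_. borel)) (\<lambda>\<omega>. \<lambda>j\<in>J. num_points R \<omega> {0..t j}))
      {g\<in>space (PiM J (\<lambda>_. borel :: ennreal measure)). \<forall>j\<in>J. of_nat (Suc j) \<le> g j}"
proof -
  let ?C = "{g\<in>space (PiM J (\<lambda>_. borel :: ennreal measure)). \<forall>j\<in>J. of_nat (Suc j) \<le> g j}"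
  let ?V = "\<lambda>\<omega>. \<lambda>j\<in>J. num_points R \<omega> {0..t j}"
  have Cs: "?C \<in> sets (PiM J (\<lambda>_. borel :: ennreal measure))" using J by measurable
  have Vm: "?V \<in> measurable M (PiM J (\<lambda>_. borel))"
    by (rule measurable_restrict) (rule PPP_count_meas[OF R]; simp)
  have "emeasure (distr M (PiM J (\<lambda>_. borel)) ?V) ?C = emeasure M (?V -` ?C \<inter> space M)"
    by (rule emeasure_distr[OF Vm Cs])
  also have "?V -` ?C \<inter> space M = {\<omega>\<in>space M. \<forall>j\<in>J. R j \<omega> \<le> t j}"
  proof (intro set_eqI iffI)
    fix \<omega> assume "\<omega> \<in> ?V -` ?C \<inter> space M"
    then have w: "\<omega> \<in> space M" and h: "\<forall>j\<in>J. of_nat (Suc j) \<le> num_points R \<omega> {0..t j}" by auto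
    show "\<omega> \<in> {\<omega>\<in>space M. \<forall>j\<in>J. R j \<omega> \<le> t j}"
      using w h count_le_iff[OF R w] by auto
  next
    fix \<omega> assume "\<omega> \<in> {\<omega>\<in>space M. \<forall>j\<in>J. R j \<omega> \<le> t j}"
    then have w: "\<omega> \<in> space M" and h: "\<forall>j\<in>J. R j \<omega> \<le> t j" by auto
    have "\<forall>j\<in>J. of_nat (Suc j) \<le> num_points R \<omega> {0..t j}"
      using h count_le_iff[OF R w] by auto
    moreover have "?V \<omega> \<in> space (PiM J (\<lambda>_. borel :: ennreal measure))"
      by (simp add: space_PiM)
    ultimately show "\<omega> \<in> ?V -` ?C \<inter> space M" using w by simp
  qed
  finally show ?thesis by (rule sym)
qed

lemma seq_law:
  assumes P: "prob_space M" and R: "is_PPP M lam R"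
    and P': "prob_space M'" and Q: "is_PPP M' lam Q"
  shows "distr M (PiM UNIV (\<lambda>_. borel :: real measure)) (\<lambda>\<omega> i. R i \<omega>) =
         distr M' (PiM UNIV (\<lambda>_. borel :: real measure)) (\<lambda>\<omega> i. Q i \<omega>)"
proof -
  let ?S = "PiM UNIV (\<lambda>_. borel :: real measure)"
  have RVm: "(\<lambda>\<omega> i. R i \<omega>) \<in> measurable M ?S"
    if R: "is_PPP M lam R" for M lam R
  proof -
    have "(\<lambda>\<omega>. \<lambda>i\<in>UNIV. R i \<omega>) \<in> measurable M ?S"
      by (rule measurable_restrict) (rule PPP_meas[OF R])
    then show ?thesis unfolding restrict_UNIV .
  qed
  have ev: "emeasure (distr M ?S (\<lambda>\<omega> i. R i \<omega>)) {f. \<forall>j\<in>J. f j \<le> t j} =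
        emeasure (distr M (PiM J (\<lambda>_. borel)) (\<lambda>\<omega>. \<lambda>j\<in>J. num_points R \<omega> {0..t j}))
      {g\<in>space (PiM J (\<lambda>_. borel :: ennreal measure)). \<forall>j\<in>J. of_nat (Suc j) \<le> g j}"
    if R: "is_PPP M lam R" and J: "finite J" for M lam R and J :: "nat set" and t
  proof -
    have Es: "{f. \<forall>j\<in>J. f j \<le> t j} \<in> sets ?S"
      using gens_sets J unfolding gens_def by blast
    have "emeasure (distr M ?S (\<lambda>\<omega> i. R i \<omega>)) {f. \<forall>j\<in>J. f j \<le> t j} =
          emeasure M ((\<lambda>\<omega> i. R i \<omega>) -` {f. \<forall>j\<in>J. f j \<le> t j} \<inter> space M)"
      by (rule emeasure_distr[OF RVm[OF R] Es])
    also have "(\<lambda>\<omega> i. R i \<omega>) -` {f. \<forall>j\<in>J. f j \<le> t j} \<inter> space M = {\<omega>\<in>space M. \<forall>j\<in>J. R j \<omega> \<le> t j}"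
      by auto
    finally show ?thesis using event_eq[OF R J] by simp
  qed
  show ?thesis
  proof (rule measure_eqI_generator_eq[where E=gens and \<Omega>=UNIV and A="\<lambda>_. UNIV"])
    show "Int_stable gens"
    proof (rule Int_stableI)
      fix a b assume "a \<in> gens" "b \<in> gens"
      then obtain J1 t1 J2 t2 where a: "a = {f. \<forall>j\<in>J1. f j \<le> t1 j}" "finite J1"
        and b: "b = {f. \<forall>j\<in>J2. f j \<le> t2 j}" "finite J2" unfolding gens_def by blast
      define t where "t j = (if j \<in> J1 \<and> j \<in> J2 then min (t1 j) (t2 j) else if j \<in> J1 then t1 j else t2 j)" for j
      have "a \<inter> b = {f. \<forall>j\<in>J1 \<union> J2. f j \<le> t j}"
        unfolding a b t_def by auto
      moreover have "finite (J1 \<union> J2)" using a b by simp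
      ultimately show "a \<inter> b \<in> gens" unfolding gens_def by blast
    qed
    show "gens \<subseteq> Pow UNIV" by simp
    fix X assume "X \<in> gens"
    then obtain J t where X: "X = {f. \<forall>j\<in>J. f j \<le> t j}" and J: "finite J" unfolding gens_def by blast
    show "emeasure (distr M ?S (\<lambda>\<omega> i. R i \<omega>)) X = emeasure (distr M' ?S (\<lambda>\<omega> i. Q i \<omega>)) X"
      unfolding X ev[OF R J] ev[OF Q J] count_law[OF P R P' Q J, of "\<lambda>j. {0..t j}", simplified] ..
  next
    show "sets (distr M ?S (\<lambda>\<omega> i. R i \<omega>)) = sigma_sets UNIV gens" by (simp add: sets_PiM_gens)
    show "sets (distr M' ?S (\<lambda>\<omega> i. Q i \<omega>)) = sigma_sets UNIV gens" by (simp add: sets_PiM_gens)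
    show "range (\<lambda>_. UNIV) \<subseteq> gens"
    proof -
      have "UNIV = {f::nat\<Rightarrow>real. \<forall>j\<in>{}. f j \<le> (\<lambda>_. 0) j}" by simp
      moreover have "{f::nat\<Rightarrow>real. \<forall>j\<in>{}. f j \<le> (\<lambda>_. 0) j} \<in> gens"
        unfolding gens_def by (intro CollectI exI[of _ "{}"] exI[of _ "\<lambda>_. 0"] conjI refl) simp
      ultimately show ?thesis by auto
    qed
    show "(\<Union>i::nat. UNIV) = (UNIV :: (nat \<Rightarrow> real) set)" by simp
    fix i :: nat
    have "emeasure (distr M ?S (\<lambda>\<omega> i. R i \<omega>)) UNIV = emeasure M ((\<lambda>\<omega> i. R i \<omega>) -` UNIV \<inter> space M)"
      by (rule emeasure_distr[OF RVm[OF R]]) (simp add: space_PiM_UNIV[symmetric])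
    also have "\<dots> = 1" using prob_space.emeasure_space_1[OF P] by simp
    finally show "emeasure (distr M ?S (\<lambda>\<omega> i. R i \<omega>)) UNIV \<noteq> \<infinity>" by simp
  qed
qed

lemma prob_CI_via_distr:
  assumes R: "is_PPP M lam R"
  shows "measure M {\<omega>\<in>space M. ereal x < CI_ratio eps R \<omega>} =
    measure (distr M (PiM UNIV (\<lambda>_. borel :: real measure)) (\<lambda>\<omega> i. R i \<omega>))
      {f\<in>space (PiM UNIV (\<lambda>_. borel :: real measure)). ereal x < Ffun eps f}"
proof -
  let ?S = "PiM UNIV (\<lambda>_. borel :: real measure)"
  have "(\<lambda>\<omega>. \<lambda>i\<in>UNIV. R i \<omega>) \<in> measurable M ?S"
    by (rule measurable_restrict) (rule PPP_meas[OF R])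
  then have RVm: "(\<lambda>\<omega> i. R i \<omega>) \<in> measurable M ?S" unfolding restrict_UNIV .
  have Fm: "Ffun eps \<in> borel_measurable ?S" by (rule Ffun_meas)
  have Ss: "{f\<in>space ?S. ereal x < Ffun eps f} \<in> sets ?S" using Fm by measurable
  have "measure (distr M ?S (\<lambda>\<omega> i. R i \<omega>)) {f\<in>space ?S. ereal x < Ffun eps f} =
    measure M ((\<lambda>\<omega> i. R i \<omega>) -` {f\<in>space ?S. ereal x < Ffun eps f} \<inter> space M)"
    by (rule measure_distr[OF RVm Ss])
  also have "(\<lambda>\<omega> i. R i \<omega>) -` {f\<in>space ?S. ereal x < Ffun eps f} \<inter> space M =
      {\<omega>\<in>space M. ereal x < CI_ratio eps R \<omega>}"
    unfolding space_PiM_UNIV CI_ratio_def Ffun_def by auto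
  finally show ?thesis by (rule sym)
qed

theorem corollary1:
  fixes lam :: "real \<Rightarrow> real" and eps a :: real
    and M :: "'a measure" and R :: "nat \<Rightarrow> 'a \<Rightarrow> real"
    and M' :: "'b measure" and R' :: "nat \<Rightarrow> 'b \<Rightarrow> real"
  assumes "eps > 0" and "a > 0" and "bs_density lam"
    and "prob_space M" and "is_PPP M lam R"
    and "prob_space M'" and "is_PPP M' (\<lambda>r. (1 / a) * lam (r / a)) R'"
  shows "\<forall>x::real. measure M {\<omega>\<in>space M. ereal x < CI_ratio eps R \<omega>}
                 = measure M' {\<omega>\<in>space M'. ereal x < CI_ratio eps R' \<omega>}"
proof
  fix x :: real
  have a: "a > 0" by fact
  have lam: "lam \<in> borel_measurable borel" using assms(3) unfolding bs_density_def by (rule conjunct1)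
  have P: "prob_space M" and R: "is_PPP M lam R" and P': "prob_space M'" by fact+
  have Q: "is_PPP M' lam (\<lambda>i \<omega>. R' i \<omega> / a)" by (rule PPP_scale[OF a lam assms(7)])
  have "measure M {\<omega>\<in>space M. ereal x < CI_ratio eps R \<omega>} =
      measure M' {\<omega>\<in>space M'. ereal x < CI_ratio eps (\<lambda>i \<omega>. R' i \<omega> / a) \<omega>}"
    unfolding prob_CI_via_distr[OF R] prob_CI_via_distr[OF Q] seq_law[OF P R P' Q] ..
  also have "{\<omega>\<in>space M'. ereal x < CI_ratio eps (\<lambda>i \<omega>. R' i \<omega> / a) \<omega>} =
      {\<omega>\<in>space M'. ereal x < CI_ratio eps R' \<omega>}"
  proof (rule Collect_cong)
    fix \<omega>
    show "(\<omega> \<in> space M' \<and> ereal x < CI_ratio eps (\<lambda>i \<omega>. R' i \<omega> / a) \<omega>) =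
          (\<omega> \<in> space M' \<and> ereal x < CI_ratio eps R' \<omega>)"
    proof (cases "\<omega> \<in> space M'")
      case True
      have nn: "\<And>i. 0 \<le> R' i \<omega>" using PPP_nonneg[OF assms(7) True] .
      have "CI_ratio eps (\<lambda>i \<omega>. R' i \<omega> / a) \<omega> = Ffun eps (\<lambda>i. R' i \<omega> / a)"
        unfolding CI_ratio_def Ffun_def ..
      also have "\<dots> = Ffun eps (\<lambda>i. R' i \<omega>)" by (rule Ffun_scale[OF a nn])
      also have "\<dots> = CI_ratio eps R' \<omega>" unfolding CI_ratio_def Ffun_def ..
      finally show ?thesis by simp
    qed simp
  qed
  finally show "measure M {\<omega>\<in>space M. ereal x < CI_ratio eps R \<omega>}
                 = measure M' {\<omega>\<in>space M'. ereal x < CI_ratio eps R' \<omega>}" .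
qed

end
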